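(* Let $(S_n)_{n\ge0}$ be defined by $S_0=3$, $S_1=1$, $S_2=3$ and $S_{n+1}=S_n+S_{n-1}+S_{n-2}$ for $n\ge 2$. Let $\alpha,\beta,\gamma$ be the roots of $x^3-x^2-x-1=0$ and $C_n=\alpha^n\beta^n+\alpha^n\gamma^n+\beta^n\gamma^n$ for $n\ge0$. Then for all $n\ge 0$, $$S_nS_{2n}=S_{3n}+S_nC_n-3.$$
   Context: $S_n$ is the generalized Lucas (generalized Tribonacci) sequence. *)

theory Defs
  imports Complex_Main
begin

fun S :: "nat \<Rightarrow> int" where
  "S 0 = 3"
| "S (Suc 0) = 1"
| "S (Suc (Suc 0)) = 3"
| "S (Suc (Suc (Suc n))) = S (Suc (Suc n)) + S (Suc n) + S n"

definition C :: "complex \<Rightarrow> complex \<Rightarrow> complex \<Rightarrow> nat \<Rightarrow> complex" where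
  "C a b c n = a^n * b^n + a^n * c^n + b^n * c^n"

end

theory Submission
  imports Defs
begin

lemma S_pow:
  fixes a b c :: complex
  assumes ha: "a^3 = a^2 + a + 1" and hb: "b^3 = b^2 + b + 1" and hc: "c^3 = c^2 + c + 1"
    and s1: "a + b + c = 1" and s2: "a*b + b*c + c*a = -1"
  shows "of_int (S n) = a^n + b^n + c^n"
proof (induction n rule: S.induct)
  case 1 then show ?case by simp
next
  case 2 then show ?case using s1 by simp
next
  case 3
  have "a^2 + b^2 + c^2 = (a+b+c)^2 - 2*(a*b+b*c+c*a)" by algebra
  then show ?case using s1 s2 by (simp add: numeral_2_eq_2)
next
  case (4 n)
  have "\<And>x::complex. x^3 = x^2 + x + 1 \<Longrightarrow> x^(Suc (Suc (Suc n))) = x^(Suc (Suc n)) + x^(Suc n) + x^n"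
  proof -
    fix x :: complex assume h: "x^3 = x^2 + x + 1"
    have "x^(Suc (Suc (Suc n))) = x^3 * x^n" by (simp add: power3_eq_cube algebra_simps)
    also have "\<dots> = (x^2 + x + 1) * x^n" using h by simp
    also have "\<dots> = x^(Suc (Suc n)) + x^(Suc n) + x^n" by (simp add: algebra_simps power2_eq_square)
    finally show "x^(Suc (Suc (Suc n))) = x^(Suc (Suc n)) + x^(Suc n) + x^n" .
  qed
  then show ?case using 4 ha hb hc by simp
qed

lemma solve_s: fixes s e :: complex assumes "e = s - 2" "s + e = 0" shows "s = 1"
proof -
  have "s + (s - 2) = 0" using assms(2) unfolding assms(1) .
  then have "2 * s = 2" by (simp add: algebra_simps mult_2)
  then show ?thesis by simp
qed

theorem mainTheorem5:
  fixes \<alpha> \<beta> \<gamma> :: complex and n :: nat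
  assumes roots: "\<And>x::complex. x^3 - x^2 - x - 1 = (x - \<alpha>) * (x - \<beta>) * (x - \<gamma>)"
  shows "of_int (S n) * of_int (S (2*n)) = of_int (S (3*n)) + of_int (S n) * C \<alpha> \<beta> \<gamma> n - 3"
proof -
  have r0: "\<alpha>*\<beta>*\<gamma> = 1" using roots[of 0] by simp
  have r1: "-2 = (1 - \<alpha>) * (1 - \<beta>) * (1 - \<gamma>)" using roots[of 1] by simp
  have rm: "-2 = (-1 - \<alpha>) * (-1 - \<beta>) * (-1 - \<gamma>)" using roots[of "-1"] by simp
  have e1: "\<alpha> + \<beta> + \<gamma> = 1" and e2: "\<alpha>*\<beta> + \<beta>*\<gamma> + \<gamma>*\<alpha> = -1"
  proof -
    have A: "-2 = 1 - (\<alpha> + \<beta> + \<gamma>) + (\<alpha>*\<beta> + \<beta>*\<gamma> + \<gamma>*\<alpha>) - \<alpha>*\<beta>*\<gamma>"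
      using r1 by (simp add: algebra_simps)
    have B: "-2 = -1 - (\<alpha> + \<beta> + \<gamma>) - (\<alpha>*\<beta> + \<beta>*\<gamma> + \<gamma>*\<alpha>) - \<alpha>*\<beta>*\<gamma>"
      using rm by (simp add: algebra_simps)
    define s where "s = \<alpha> + \<beta> + \<gamma>"
    define e where "e = \<alpha>*\<beta> + \<beta>*\<gamma> + \<gamma>*\<alpha>"
    have A': "e = s - 2" using A r0 unfolding s_def[symmetric] e_def[symmetric] by (simp add: algebra_simps)
    have B': "s + e = 0" using B r0 unfolding s_def[symmetric] e_def[symmetric] by (simp add: algebra_simps)
    have s1: "s = 1" by (rule solve_s[OF A' B'])
    then show "\<alpha> + \<beta> + \<gamma> = 1" unfolding s_def .
    show "\<alpha>*\<beta> + \<beta>*\<gamma> + \<gamma>*\<alpha> = -1" using A' s1 unfolding e_def by simp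
  qed
  have rt: "x^3 = x^2 + x + 1" if "x = \<alpha> \<or> x = \<beta> \<or> x = \<gamma>" for x
  proof -
    have "x^3 - x^2 - x - 1 = 0" using roots[of x] that by auto
    then show ?thesis by (simp add: algebra_simps)
  qed
  have Sp: "of_int (S m) = \<alpha>^m + \<beta>^m + \<gamma>^m" for m
    by (rule S_pow) (use rt e1 e2 in auto)
  define x where "x = \<alpha>^n" define y where "y = \<beta>^n" define z where "z = \<gamma>^n"
  have xyz: "x*y*z = 1" unfolding x_def y_def z_def using r0 by (metis power_mult_distrib power_one)
  have "of_int (S n) = x+y+z" using Sp x_def y_def z_def by simp
  moreover have "of_int (S (2*n)) = x^2+y^2+z^2"
    using Sp[of "2*n"] x_def y_def z_def by (simp add: power_mult mult.commute)
  moreover have "of_int (S (3*n)) = x^3+y^3+z^3"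
    using Sp[of "3*n"] x_def y_def z_def by (simp add: power_mult mult.commute)
  moreover have "C \<alpha> \<beta> \<gamma> n = x*y + x*z + y*z" unfolding C_def x_def y_def z_def by simp
  ultimately show ?thesis using xyz
    by (simp add: algebra_simps power2_eq_square power3_eq_cube)
qed

end
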